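(* Let $\Lambda,\alpha,r$ be positive integers with $\alpha\in[\Lambda-1]$ and $r\in[\Lambda-\alpha]$. Let $D_{\Lambda,r,\alpha}$ be the $\binom{\Lambda}{r}\times\binom{\Lambda}{\alpha}$ array defined below. Then $D_{\Lambda,r,\alpha}$ is a $\binom{r+\alpha}{r}$-regular $\left(\binom{\Lambda}{\alpha},\binom{\Lambda}{r},\binom{\Lambda}{\alpha+r}\right)$ MRA. Moreover, the symbol $*$ appears exactly $\binom{\Lambda}{r}-\binom{\Lambda-\alpha}{r}$ times in each column.
   Context: Notation: $[0,n)=\{0,1,\dots,n-1\}$, $[n]=\{1,\dots,n\}$. Construction (Algorithm 1): Order all subsets of $[0,\Lambda)$ of size $\alpha+r$ lexicographically and, for such a subset $T'$, let $y_{\alpha+r}(T')\in[0,\binom{\Lambda}{\alpha+r})$ be its position in this order minus 1. The array $D_{\Lambda,r,\alpha}$ has rows indexed by the $r$-subsets $T\subset[0,\Lambda)$ and columns indexed by the $\alpha$-subsets $U\subset[0,\Lambda)$, and entries $d_{T,U}=*$ if $T\cap U\neq\emptyset$, and $d_{T,U}=y_{\alpha+r}(T\cup U)$ if $T\cap U=\emptyset$. Map-Reduce Array (MRA): For positive integers $K,F,S$, an $F\times K$ array $P=[p_{f,k}]$, whose entries are either the symbol $*$ or integers from $[0,S)$, with every integer of $[0,S)$ occurring in $P$, is a $(K,F,S)$ MRA if: (C1) each integer occurs more than once in $P$; (C2) whenever two distinct entries satisfy $p_{f_1,k_1}=p_{f_2,k_2}=s$ with $s$ an integer, then $f_1\neq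 f_2$, $k_1\neq k_2$, and $p_{f_1,k_2}=p_{f_2,k_1}=*$. It is a $g$-regular MRA (for a constant $g\ge 2$) if it satisfies (C2) and every integer occurs exactly $g$ times. *)

theory Defs
  imports Main
begin

text \<open>Arrays: an array with rows indexed by a finite set Rows and columns indexed by a
finite set Cols; an entry is None (the symbol *) or Some s (the integer s).\<close>

definition MRA :: "nat \<Rightarrow> nat \<Rightarrow> nat \<Rightarrow> 'f set \<Rightarrow> 'k set \<Rightarrow> ('f \<Rightarrow> 'k \<Rightarrow> nat option) \<Rightarrow> bool" where
  "MRA K F S Rows Cols P \<longleftrightarrow>
     0 < K \<and> 0 < F \<and> 0 < S \<and>
     finite Rows \<and> finite Cols \<and> card Rows = F \<and> card Cols = K \<and>
     (\<forall>f\<in>Rows. \<forall>k\<in>Cols. \<forall>s. P f k = Some s \<longrightarrow> s < S) \<and>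
     (\<forall>s<S. \<exists>f\<in>Rows. \<exists>k\<in>Cols. P f k = Some s) \<and>
     \<comment> \<open>(C1)\<close>
     (\<forall>s<S. card {(f, k). f \<in> Rows \<and> k \<in> Cols \<and> P f k = Some s} > 1) \<and>
     \<comment> \<open>(C2)\<close>
     (\<forall>f1\<in>Rows. \<forall>f2\<in>Rows. \<forall>k1\<in>Cols. \<forall>k2\<in>Cols. \<forall>s.
        (f1, k1) \<noteq> (f2, k2) \<and> P f1 k1 = Some s \<and> P f2 k2 = Some s \<longrightarrow>
        f1 \<noteq> f2 \<and> k1 \<noteq> k2 \<and> P f1 k2 = None \<and> P f2 k1 = None)"

definition regular_MRA :: "nat \<Rightarrow> nat \<Rightarrow> nat \<Rightarrow> nat \<Rightarrow> 'f set \<Rightarrow> 'k set \<Rightarrow> ('f \<Rightarrow> 'k \<Rightarrow> nat option) \<Rightarrow> bool" where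
  "regular_MRA g K F S Rows Cols P \<longleftrightarrow>
     2 \<le> g \<and> MRA K F S Rows Cols P \<and>
     (\<forall>s<S. card {(f, k). f \<in> Rows \<and> k \<in> Cols \<and> P f k = Some s} = g)"

definition lex_rank :: "nat \<Rightarrow> nat \<Rightarrow> nat set \<Rightarrow> nat" where
  "lex_rank L k T' = card {T''. T'' \<subseteq> {0..<L} \<and> card T'' = k \<and>
      lexordp (<) (sorted_list_of_set T'') (sorted_list_of_set T')}"

definition subsets_of_size :: "nat \<Rightarrow> nat \<Rightarrow> nat set set" where
  "subsets_of_size L k = {T. T \<subseteq> {0..<L} \<and> card T = k}"

definition D_arr :: "nat \<Rightarrow> nat \<Rightarrow> nat \<Rightarrow> nat set \<Rightarrow> nat set \<Rightarrow> nat option" where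
  "D_arr L r \<alpha> T U = (if T \<inter> U \<noteq> {} then None else Some (lex_rank L (\<alpha> + r) (T \<union> U)))"

end

theory Submission
  imports Defs
begin

lemma lex_irr: "\<not> lexordp (<) (xs::nat list) xs"
  unfolding lexordp_def by (rule lexord_irreflexive) simp

lemma lex_trans: "lexordp (<) (xs::nat list) ys \<Longrightarrow> lexordp (<) ys zs \<Longrightarrow> lexordp (<) xs zs"
  unfolding lexordp_def
  by (rule lexord_trans) (auto simp: trans_def)

lemma lex_lin: "lexordp (<) (xs::nat list) ys \<or> xs = ys \<or> lexordp (<) ys xs"
  unfolding lexordp_def
  by (rule lexord_linear) auto

lemma rank_bij:
  fixes R :: "'a \<Rightarrow> 'a \<Rightarrow> bool"
  assumes fin: "finite A" and irr: "\<And>x. \<not> R x x"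
    and tr: "\<And>x y z. R x y \<Longrightarrow> R y z \<Longrightarrow> R x z"
    and tot: "\<And>x y. x \<in> A \<Longrightarrow> y \<in> A \<Longrightarrow> R x y \<or> x = y \<or> R y x"
  shows "bij_betw (\<lambda>x. card {y\<in>A. R y x}) A {0..<card A}"
proof -
  let ?f = "\<lambda>x. card {y\<in>A. R y x}"
  have inj: "inj_on ?f A"
  proof (rule inj_onI)
    fix x y assume xy: "x \<in> A" "y \<in> A" "?f x = ?f y"
    show "x = y"
    proof (rule ccontr)
      assume "x \<noteq> y"
      then have "R x y \<or> R y x" using tot xy by blast
      moreover have "{z\<in>A. R z x} \<subset> {z\<in>A. R z y}" if "R x y" "x \<in> A"
        using that irr tr by blast
      moreover have "{z\<in>A. R z y} \<subset> {z\<in>A. R z x}" if "R y x" "y \<in> A"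
        using that irr tr by blast
      ultimately show False using xy fin psubset_card_mono
        by (metis (no_types, lifting) finite_subset less_irrefl mem_Collect_eq subsetI)
    qed
  qed
  have img: "?f ` A \<subseteq> {0..<card A}"
  proof
    fix n assume "n \<in> ?f ` A"
    then obtain x where x: "x \<in> A" "n = ?f x" by blast
    have "{y\<in>A. R y x} \<subseteq> A - {x}" using irr by blast
    then have "?f x \<le> card (A - {x})" using fin by (intro card_mono) auto
    also have "\<dots> < card A"
    proof -
      have "0 < card A" using fin x(1) card_gt_0_iff by blast
      then show ?thesis using fin x(1) by simp
    qed
    finally show "n \<in> {0..<card A}" using x by simp
  qed
  have "card (?f ` A) = card {0..<card A}" using card_image[OF inj] by simp
  then have "?f ` A = {0..<card A}" using img by (intro card_subset_eq) auto
  then show ?thesis using inj by (simp add: bij_betw_def)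
qed

lemma card_subsets: "card (subsets_of_size L k) = L choose k"
  unfolding subsets_of_size_def using n_subsets[of "{0..<L}" k] by simp

lemma finite_subsets: "finite (subsets_of_size L k)"
  unfolding subsets_of_size_def by (rule finite_subset[of _ "Pow {0..<L}"]) auto

lemma lex_rank_bij: "bij_betw (lex_rank L k) (subsets_of_size L k) {0..<L choose k}"
proof -
  let ?R = "\<lambda>X Y. lexordp (<) (sorted_list_of_set X) (sorted_list_of_set (Y::nat set))"
  have eq: "lex_rank L k = (\<lambda>x. card {y\<in>subsets_of_size L k. ?R y x})"
    unfolding lex_rank_def subsets_of_size_def by auto
  have "bij_betw (\<lambda>x. card {y\<in>subsets_of_size L k. ?R y x}) (subsets_of_size L k)
          {0..<card (subsets_of_size L k)}"
  proof (rule rank_bij[OF finite_subsets])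
    show "\<And>x. \<not> ?R x x" using lex_irr by blast
    show "\<And>x y z. ?R x y \<Longrightarrow> ?R y z \<Longrightarrow> ?R x z" using lex_trans by blast
    fix x y assume "x \<in> subsets_of_size L k" "y \<in> subsets_of_size L k"
    then have "finite x" "finite y" unfolding subsets_of_size_def
      by (auto intro: finite_subset)
    then show "?R x y \<or> x = y \<or> ?R y x"
      using lex_lin[of "sorted_list_of_set x" "sorted_list_of_set y"]
      by (metis sorted_list_of_set.set_sorted_key_list_of_set)
  qed
  then show ?thesis using eq card_subsets by simp
qed

lemma entry_Some:
  assumes T: "T \<in> subsets_of_size L r" and U: "U \<in> subsets_of_size L \<alpha>"
  shows "D_arr L r \<alpha> T U = Some s \<longleftrightarrow>
     T \<inter> U = {} \<and> T \<union> U \<in> subsets_of_size L (\<alpha> + r) \<and> lex_rank L (\<alpha> + r) (T \<union> U) = s"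
proof -
  have "finite T" "finite U" "card T = r" "card U = \<alpha>" "T \<subseteq> {0..<L}" "U \<subseteq> {0..<L}"
    using T U unfolding subsets_of_size_def by (auto intro: finite_subset)
  then have "T \<inter> U = {} \<Longrightarrow> T \<union> U \<in> subsets_of_size L (\<alpha> + r)"
    unfolding subsets_of_size_def by (auto simp: card_Un_disjoint)
  then show ?thesis unfolding D_arr_def by auto
qed

theorem mainTheorem5:
  fixes L r \<alpha> :: nat
  assumes "1 \<le> \<alpha>" and "\<alpha> \<le> L - 1" and "1 \<le> r" and "r \<le> L - \<alpha>"
  shows "regular_MRA ((r + \<alpha>) choose r) (L choose \<alpha>) (L choose r) (L choose (\<alpha> + r))
           (subsets_of_size L r) (subsets_of_size L \<alpha>) (D_arr L r \<alpha>)
       \<and> (\<forall>U \<in> subsets_of_size L \<alpha>.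
            card {T \<in> subsets_of_size L r. D_arr L r \<alpha> T U = None}
              = (L choose r) - ((L - \<alpha>) choose r))"
proof -
  define Rows where "Rows = subsets_of_size L r"
  define Cols where "Cols = subsets_of_size L \<alpha>"
  define Ws where "Ws = subsets_of_size L (\<alpha> + r)"
  define rk where "rk = lex_rank L (\<alpha> + r)"
  define P where "P = D_arr L r \<alpha>"
  define S where "S = L choose (\<alpha> + r)"
  have sz: "\<alpha> + r \<le> L" "\<alpha> \<le> L" "r \<le> L" using assms by auto
  have bij: "bij_betw rk Ws {0..<S}" unfolding rk_def Ws_def S_def by (rule lex_rank_bij)
  have injrk: "\<And>X Y. X \<in> Ws \<Longrightarrow> Y \<in> Ws \<Longrightarrow> rk X = rk Y \<Longrightarrow> X = Y"
    using bij by (auto simp: bij_betw_def inj_on_def)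
  have ent: "\<And>T U s. T \<in> Rows \<Longrightarrow> U \<in> Cols \<Longrightarrow> P T U = Some s \<longleftrightarrow>
      T \<inter> U = {} \<and> T \<union> U \<in> Ws \<and> rk (T \<union> U) = s"
    unfolding P_def Rows_def Cols_def Ws_def rk_def by (rule entry_Some)
  have memR: "\<And>T. T \<in> Rows \<longleftrightarrow> T \<subseteq> {0..<L} \<and> card T = r"
    unfolding Rows_def subsets_of_size_def by simp
  have memC: "\<And>T. T \<in> Cols \<longleftrightarrow> T \<subseteq> {0..<L} \<and> card T = \<alpha>"
    unfolding Cols_def subsets_of_size_def by simp
  have memW: "\<And>T. T \<in> Ws \<longleftrightarrow> T \<subseteq> {0..<L} \<and> card T = \<alpha> + r"
    unfolding Ws_def subsets_of_size_def by simp
  have finL: "\<And>T. T \<subseteq> {0..<L} \<Longrightarrow> finite T" by (auto intro: finite_subset)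
  have cnt: "card {(f, k). f \<in> Rows \<and> k \<in> Cols \<and> P f k = Some s} = (r + \<alpha>) choose r"
    if s: "s < S" for s
  proof -
    obtain W where W: "W \<in> Ws" "rk W = s" proof -
      have "s \<in> rk ` Ws" using bij s unfolding bij_betw_def by simp
      then show ?thesis using that by blast
    qed
    have finW: "finite W" using W memW finL by blast
    have eqset: "{(f, k). f \<in> Rows \<and> k \<in> Cols \<and> P f k = Some s} =
        (\<lambda>T. (T, W - T)) ` {T. T \<subseteq> W \<and> card T = r}"
    proof
      show "{(f, k). f \<in> Rows \<and> k \<in> Cols \<and> P f k = Some s} \<subseteq> (\<lambda>T. (T, W - T)) ` {T. T \<subseteq> W \<and> card T = r}"
      proof
        fix x assume "x \<in> {(f, k). f \<in> Rows \<and> k \<in> Cols \<and> P f k = Some s}"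
        then obtain T U where x: "x = (T, U)" "T \<in> Rows" "U \<in> Cols" "P T U = Some s" by blast
        then have d: "T \<inter> U = {}" "T \<union> U \<in> Ws" "rk (T \<union> U) = s" using ent by auto
        then have "T \<union> U = W" using injrk[OF d(2) W(1)] d(3) W(2) by simp
        then have "U = W - T" "T \<subseteq> W" using d by auto
        then show "x \<in> (\<lambda>T. (T, W - T)) ` {T. T \<subseteq> W \<and> card T = r}"
          using x memR by auto
      qed
    next
      show "(\<lambda>T. (T, W - T)) ` {T. T \<subseteq> W \<and> card T = r} \<subseteq> {(f, k). f \<in> Rows \<and> k \<in> Cols \<and> P f k = Some s}"
      proof
        fix x assume "x \<in> (\<lambda>T. (T, W - T)) ` {T. T \<subseteq> W \<and> card T = r}"
        then obtain T where x: "x = (T, W - T)" "T \<subseteq> W" "card T = r" by blast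
        have "card (W - T) = \<alpha>" using card_Diff_subset[of T W] x finW W memW
          by (auto intro: finite_subset)
        then have TR: "T \<in> Rows" and UC: "W - T \<in> Cols" using x W memW memR memC by auto
        have "T \<union> (W - T) = W" using x by auto
        then have "P T (W - T) = Some s" using ent[OF TR UC] W by auto
        then show "x \<in> {(f, k). f \<in> Rows \<and> k \<in> Cols \<and> P f k = Some s}" using x TR UC by auto
      qed
    qed
    have inj: "inj_on (\<lambda>T. (T, W - T)) {T. T \<subseteq> W \<and> card T = r}" by (auto simp: inj_on_def)
    have "card {(f, k). f \<in> Rows \<and> k \<in> Cols \<and> P f k = Some s} = card {T. T \<subseteq> W \<and> card T = r}"
      unfolding eqset by (rule card_image[OF inj])
    also have "\<dots> = (\<alpha> + r) choose r" using n_subsets[OF finW] W memW by simp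
    finally show ?thesis by (simp add: add.commute)
  qed
  have g2: "2 \<le> (r + \<alpha>) choose r"
  proof -
    obtain r' where r': "r = Suc r'" using assms(3) by (cases r) auto
    have "(r + \<alpha>) choose r = ((r' + \<alpha>) choose r') + ((r' + \<alpha>) choose r)"
      using r' by simp
    moreover have "0 < (r' + \<alpha>) choose r'" by simp
    moreover have "0 < (r' + \<alpha>) choose r" using r' assms(1) by (simp add: zero_less_binomial_iff)
    ultimately show ?thesis by linarith
  qed
  have posS: "0 < S" unfolding S_def using sz by simp
  have rng: "\<forall>f\<in>Rows. \<forall>k\<in>Cols. \<forall>s. P f k = Some s \<longrightarrow> s < S"
  proof (intro ballI allI impI)
    fix f k s assume fk: "f \<in> Rows" "k \<in> Cols" "P f k = Some s"
    then have "f \<union> k \<in> Ws" "rk (f \<union> k) = s" using ent by auto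
    then show "s < S" using bij unfolding bij_betw_def by auto
  qed
  have ex: "\<forall>s<S. \<exists>f\<in>Rows. \<exists>k\<in>Cols. P f k = Some s"
  proof (intro allI impI)
    fix s assume "s < S"
    then have "card {(f, k). f \<in> Rows \<and> k \<in> Cols \<and> P f k = Some s} \<noteq> 0" using cnt g2 by simp
    then have "{(f, k). f \<in> Rows \<and> k \<in> Cols \<and> P f k = Some s} \<noteq> {}" by (metis card.empty)
    then show "\<exists>f\<in>Rows. \<exists>k\<in>Cols. P f k = Some s" by blast
  qed
  have C2: "\<forall>f1\<in>Rows. \<forall>f2\<in>Rows. \<forall>k1\<in>Cols. \<forall>k2\<in>Cols. \<forall>s.
        (f1, k1) \<noteq> (f2, k2) \<and> P f1 k1 = Some s \<and> P f2 k2 = Some s \<longrightarrow>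
        f1 \<noteq> f2 \<and> k1 \<noteq> k2 \<and> P f1 k2 = None \<and> P f2 k1 = None"
  proof (intro ballI allI impI)
    fix T1 T2 U1 U2 s
    assume T: "T1 \<in> Rows" "T2 \<in> Rows" and U: "U1 \<in> Cols" "U2 \<in> Cols"
      and h: "(T1, U1) \<noteq> (T2, U2) \<and> P T1 U1 = Some s \<and> P T2 U2 = Some s"
    have d1: "T1 \<inter> U1 = {}" "T1 \<union> U1 \<in> Ws" "rk (T1 \<union> U1) = s" using ent T U h by auto
    have d2: "T2 \<inter> U2 = {}" "T2 \<union> U2 \<in> Ws" "rk (T2 \<union> U2) = s" using ent T U h by auto
    have W: "T1 \<union> U1 = T2 \<union> U2" using injrk[OF d1(2) d2(2)] d1(3) d2(3) by simp
    have ne1: "T1 \<noteq> T2"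
    proof
      assume "T1 = T2"
      then have "U1 = U2" using W d1 d2 by blast
      then show False using h \<open>T1 = T2\<close> by simp
    qed
    have ne2: "U1 \<noteq> U2"
    proof
      assume "U1 = U2"
      then have "T1 = T2" using W d1 d2 by blast
      then show False using ne1 by simp
    qed
    have fin: "finite T1" "finite T2" using T memR finL by auto
    have i1: "T1 \<inter> U2 \<noteq> {}"
    proof
      assume "T1 \<inter> U2 = {}"
      then have "T1 \<subseteq> T2" using W by blast
      moreover have "card T1 = card T2" using T memR by simp
      ultimately have "T1 = T2" using card_subset_eq[OF fin(2)] by blast
      then show False using ne1 by simp
    qed
    have i2: "T2 \<inter> U1 \<noteq> {}"
    proof
      assume "T2 \<inter> U1 = {}"
      then have "T2 \<subseteq> T1" using W by blast
      moreover have "card T2 = card T1" using T memR by simp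
      ultimately have "T2 = T1" using card_subset_eq[OF fin(1)] by blast
      then show False using ne1 by simp
    qed
    show "T1 \<noteq> T2 \<and> U1 \<noteq> U2 \<and> P T1 U2 = None \<and> P T2 U1 = None"
      using ne1 ne2 i1 i2 unfolding P_def D_arr_def by auto
  qed
  have MRA: "MRA (L choose \<alpha>) (L choose r) S Rows Cols P"
    unfolding MRA_def
  proof (intro conjI)
    show "0 < L choose \<alpha>" "0 < L choose r" using sz by auto
    show "0 < S" by (rule posS)
    show "finite Rows" "finite Cols" unfolding Rows_def Cols_def by (rule finite_subsets)+
    show "card Rows = L choose r" "card Cols = L choose \<alpha>"
      unfolding Rows_def Cols_def by (rule card_subsets)+
    show "\<forall>s<S. 1 < card {(f, k). f \<in> Rows \<and> k \<in> Cols \<and> P f k = Some s}" using cnt g2 by simp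
  qed (fact rng | fact ex | fact C2)+
  have col: "card {T \<in> Rows. P T U = None} = (L choose r) - ((L - \<alpha>) choose r)"
    if U: "U \<in> Cols" for U
  proof -
    have eq: "{T \<in> Rows. P T U = None} = Rows - {T. T \<subseteq> {0..<L} - U \<and> card T = r}"
      unfolding P_def D_arr_def using memR by auto
    have sub: "{T. T \<subseteq> {0..<L} - U \<and> card T = r} \<subseteq> Rows" using memR by auto
    have fU: "finite U" "U \<subseteq> {0..<L}" "card U = \<alpha>" using U memC finL by auto
    have "card ({0..<L} - U) = L - \<alpha>" using fU by (simp add: card_Diff_subset)
    then have "card {T. T \<subseteq> {0..<L} - U \<and> card T = r} = (L - \<alpha>) choose r"
      using n_subsets[of "{0..<L} - U" r] by simp
    moreover have "finite Rows" unfolding Rows_def by (rule finite_subsets)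
    moreover have "finite {T. T \<subseteq> {0..<L} - U \<and> card T = r}"
      using finite_subset[OF sub] \<open>finite Rows\<close> by blast
    ultimately show ?thesis using eq card_Diff_subset[OF _ sub] card_subsets[of L r]
      unfolding Rows_def[symmetric] by simp
  qed
  have "regular_MRA ((r + \<alpha>) choose r) (L choose \<alpha>) (L choose r) S Rows Cols P"
    unfolding regular_MRA_def using MRA cnt g2 by blast
  then show ?thesis using col unfolding Rows_def Cols_def P_def S_def by blast
qed

end
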